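(* Let $G=(V,E)$ be a finite graph with boundary $B\subseteq V$, $|B|\ge2$, and let $\delta_B=\min_{x\in B}\deg(x)$ be the minimum degree (in $G$) of the boundary vertices. Then $$\sigma_2(G,B)\le\frac{|B|}{|B|-1}\,\delta_B.$$
   Context: $G=(V,E)$ is a finite undirected graph. A boundary is a subset $B\subseteq V$ with $|B|\ge2$. For $f:V\to\mathbb{R}$, $f\neq0$, the Rayleigh quotient is $R(f)=\frac{\sum_{\{x,y\}\in E}(f(x)-f(y))^2}{\sum_{x\in B}f(x)^2}$, interpreted as $+\infty$ if $f$ vanishes on $B$. For $1\le k\le|B|$, the $k$-th Steklov eigenvalue is $\sigma_k(G,B)=\min_{W\subseteq\mathbb{R}^V,\dim W=k}\max_{0\ne f\in W}R(f)$, so $0=\sigma_1\le\sigma_2\le\cdots$. *)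

theory Defs
  imports "HOL-Analysis.Analysis"
begin

text \<open>A finite undirected (simple) graph with vertex set the finite type 'v;
  edges are two-element subsets of the vertex set.  Functions on vertices are
  vectors in real^'v.\<close>

definition is_graph :: "'v::finite set set \<Rightarrow> bool" where
  "is_graph E \<longleftrightarrow> (\<forall>e\<in>E. card e = 2)"

definition degree :: "'v::finite set set \<Rightarrow> 'v \<Rightarrow> nat" where
  "degree E x = card {e\<in>E. x \<in> e}"

definition rayleigh :: "'v::finite set set \<Rightarrow> 'v set \<Rightarrow> real^'v \<Rightarrow> ereal" where
  "rayleigh E B f =
    (if (\<Sum>x\<in>B. (f$x)^2) = 0 then \<infinity>
     else ereal ((\<Sum>e\<in>E. (\<Sum>x\<in>e. \<Sum>y\<in>e. (f$x - f$y)^2) / 2) / (\<Sum>x\<in>B. (f$x)^2)))"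

definition steklov :: "'v::finite set set \<Rightarrow> 'v set \<Rightarrow> nat \<Rightarrow> ereal" where
  "steklov E B k =
    (INF W \<in> {W :: (real^'v) set. subspace W \<and> dim W = k}.
       (SUP f \<in> W - {0}. rayleigh E B f))"

end

theory Submission
  imports Defs
begin

lemma edge_term:
  fixes a b :: real
  assumes "card (e::'v::finite set) = 2"
  shows "(\<Sum>x\<in>e. \<Sum>y\<in>e. ((a + (if x = x0 then b else 0)) - (a + (if y = x0 then b else 0)))^2) / 2
     = (if x0 \<in> e then b^2 else 0)"
proof -
  obtain u v where e: "e = {u, v}" and uv: "u \<noteq> v" using assms by (auto simp: card_2_iff)
  show ?thesis using uv unfolding e by (auto simp: power2_eq_square)
qed

lemma edge_sum:
  fixes a b :: real and E :: "'v::finite set set"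
  assumes "is_graph E"
  shows "(\<Sum>e\<in>E. (\<Sum>x\<in>e. \<Sum>y\<in>e. ((a + (if x = x0 then b else 0)) - (a + (if y = x0 then b else 0)))^2) / 2)
     = b^2 * real (degree E x0)"
proof -
  have "(\<Sum>e\<in>E. (\<Sum>x\<in>e. \<Sum>y\<in>e. ((a + (if x = x0 then b else 0)) - (a + (if y = x0 then b else 0)))^2) / 2)
      = (\<Sum>e\<in>E. if x0 \<in> e then b^2 else 0)"
    using assms unfolding is_graph_def by (intro sum.cong refl edge_term) auto
  also have "\<dots> = (\<Sum>e\<in>{e\<in>E. x0 \<in> e}. b^2)"
    by (simp add: sum.inter_filter[symmetric])
  also have "\<dots> = b^2 * real (degree E x0)" by (simp add: degree_def)
  finally show ?thesis .
qed

theorem mainTheorem3: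
  fixes E :: "'v::finite set set" and B :: "'v set"
  assumes "is_graph E" and "card B \<ge> 2"
  shows "steklov E B 2 \<le>
    ereal (real (card B) / (real (card B) - 1) * real (Min (degree E ` B)))"
proof -
  have finB: "finite B" by simp
  have neB: "B \<noteq> {}" using assms(2) by auto
  obtain x0 where x0B: "x0 \<in> B" and x0d: "degree E x0 = Min (degree E ` B)"
  proof -
    have "Min (degree E ` B) \<in> degree E ` B" using finB neB by (intro Min_in) auto
    then show ?thesis using that by auto
  qed
  obtain y where yB: "y \<in> B" and yx: "y \<noteq> x0"
  proof -
    have "card (B - {x0}) \<ge> 1" using assms(2) x0B by (simp add: card_Diff_singleton)
    then have "B - {x0} \<noteq> {}" by (metis card.empty not_one_le_zero)
    then show ?thesis using that by auto
  qed
  define one :: "real^'v" where "one = (\<chi> x. 1)"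
  define dl :: "real^'v" where "dl = axis x0 1"
  define W where "W = span {one, dl}"
  define n where "n = real (card B)"
  define d where "d = real (Min (degree E ` B))"
  have n2: "n \<ge> 2" using assms(2) unfolding n_def by simp
  have d0: "d \<ge> 0" unfolding d_def by simp
  have dl_nz: "dl \<noteq> 0" unfolding dl_def by (simp add: axis_eq_0_iff)
  have one_notin: "one \<notin> span {dl}"
  proof
    assume "one \<in> span {dl}"
    then obtain k where "one = k *\<^sub>R dl" by (auto simp: span_singleton)
    then have "one $ y = (k *\<^sub>R dl) $ y" by simp
    then show False using yx unfolding one_def dl_def by (simp add: axis_def)
  qed
  have indep: "independent {one, dl}"
    using dl_nz one_notin by (simp add: independent_insert)
  have neq: "one \<noteq> dl" using one_notin dl_nz by (metis span_base singletonI)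
  have dimW: "dim W = 2" unfolding W_def
    using dim_span_eq_card_independent[OF indep] neq by simp
  have subW: "subspace W" unfolding W_def by simp
  have bound: "rayleigh E B f \<le> ereal (n / (n - 1) * d)" if fW: "f \<in> W - {0}" for f
  proof -
    from fW obtain a b where fab: "f = a *\<^sub>R one + b *\<^sub>R dl" and fnz: "f \<noteq> 0"
      unfolding W_def by (auto simp: span_insert span_singleton) (metis diff_add_cancel add.commute)
    have fx: "f $ x = a + (if x = x0 then b else 0)" for x
      unfolding fab one_def dl_def by (simp add: axis_def)
    have num: "(\<Sum>e\<in>E. (\<Sum>x\<in>e. \<Sum>y\<in>e. (f$x - f$y)^2) / 2) = b^2 * d"
      unfolding fx edge_sum[OF assms(1)] d_def x0d ..
    have "(\<Sum>x\<in>B. (f$x)^2) = (f$x0)^2 + (\<Sum>x\<in>B-{x0}. (f$x)^2)"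
      using x0B finB by (simp add: sum.remove)
    also have "(\<Sum>x\<in>B-{x0}. (f$x)^2) = (\<Sum>x\<in>B-{x0}. a^2)"
      by (intro sum.cong) (auto simp: fx)
    also have "\<dots> = (n - 1) * a^2" using x0B finB unfolding n_def using assms(2) by (simp add: card_Diff_singleton of_nat_diff)
    finally have den: "(\<Sum>x\<in>B. (f$x)^2) = (a+b)^2 + (n-1)*a^2" by (simp add: fx)
    show ?thesis
    proof (cases "(a+b)^2 + (n-1)*a^2 = 0")
      case True
      have p1: "(a+b)^2 \<ge> 0" by simp
      have p2: "(n-1)*a^2 \<ge> 0" using n2 by simp
      have "(a+b)^2 = 0" "(n-1)*a^2 = 0" using True p1 p2 by linarith+
      then have "a = 0" "a + b = 0" using n2 by auto
      then have "f = 0" unfolding fab by simp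
      then show ?thesis using fnz by simp
    next
      case False
      have p2: "(n-1)*a^2 \<ge> 0" using n2 by simp
      have Dpos: "(a+b)^2 + (n-1)*a^2 > 0" using False p2 zero_le_power2[of "a+b"] by linarith
      have key: "(n-1) * b^2 \<le> n * ((a+b)^2 + (n-1)*a^2)"
      proof -
        have "n * ((a+b)^2 + (n-1)*a^2) - (n-1) * b^2 = (n*a+b)^2"
          by (simp add: power2_eq_square algebra_simps)
        then show ?thesis using zero_le_power2[of "n*a+b"] by linarith
      qed
      have "b^2 * d / ((a+b)^2 + (n-1)*a^2) \<le> n / (n - 1) * d"
      proof -
        have "b^2 * d * (n-1) \<le> n * d * ((a+b)^2 + (n-1)*a^2)"
          using mult_right_mono[OF key d0] by (simp add: algebra_simps)
        then show ?thesis using Dpos n2 by (simp add: divide_le_eq le_divide_eq mult.commute mult.left_commute)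
      qed
      then show ?thesis unfolding rayleigh_def num den using False by simp
    qed
  qed
  have "steklov E B 2 \<le> (SUP f \<in> W - {0}. rayleigh E B f)"
    unfolding steklov_def by (rule INF_lower) (use subW dimW in auto)
  also have "\<dots> \<le> ereal (n / (n - 1) * d)" by (rule SUP_least) (rule bound)
  finally show ?thesis unfolding n_def d_def .
qed

end
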